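(* Let $n\ge 1$ be an integer, let $\varepsilon\in(0,1)$ and set $\delta=-\frac{\log_2(1-\varepsilon)}{n}$. Then every channel $W$ satisfies $$\frac{\mathcal{R}^{(\varepsilon)}_{W,n}}{2}-\delta\;\le\;\mathcal{R}^{(0)}_{W,n}.$$ Consequently, with $\delta^*=-\log_2(1-\varepsilon)$, every channel $W$ satisfies $\frac{\mathcal{R}^{(\varepsilon)}_{W}}{2}-\delta^*\le \mathcal{R}^{(0)}_{W}$.
   Context: Fix an integer $q\ge 1$, $Q=2^q$, $[Q]=\{1,\dots,Q\}$. A (two-source/two-terminal deterministic) channel is a function $W=(W_1,W_2)$ with $W_i:[Q]^2\to\mathcal{O}$ for some finite output alphabet $\mathcal{O}$. For block length $n$, $W^{(n)}=(W^{(n)}_1,W^{(n)}_2)$ acts coordinatewise: for $x=(x_1,\dots,x_n),y=(y_1,\dots,y_n)\in[Q]^n$, $W^{(n)}_i(x,y)=(W_i(x_1,y_1),\dots,W_i(x_n,y_n))$. A code of block length $n$ with message sets $[M_1],[M_2]$ consists of encoders $E_i:[M_i]\to[Q]^n$ and decoders $D_i:\mathcal{O}^n\to[M_i]$ ($i=1,2$); it succeeds on $(m_1,m_2)$ if $D_i(W^{(n)}_i(E_1(m_1),E_2(m_2)))=m_i$ for both $i=1,2$. A rate pair $(R_1,R_2)$ is achievable with probability $1-\varepsilon$ and block length $n$ if, with $M_i=2^{R_in}$ (positive integers), some code succeeds with probability at least $1-\varepsilon$ when $(m_1,m_2)$ is uniform on $[M_1]\times[M_2]$. The $\varepsilon$-error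 sum capacity is $\mathcal{R}^{(\varepsilon)}_{W,n}=\sup(R_1+R_2)$ over such pairs, and $\mathcal{R}^{(\varepsilon)}_{W}=\sup_n\mathcal{R}^{(\varepsilon)}_{W,n}$. For $\varepsilon=0$ the code must succeed on every message pair. Logarithms are base 2. *)

theory Defs
  imports Complex_Main
begin

definition words :: "nat \<Rightarrow> nat \<Rightarrow> nat list set" where
  "words q n = {x. length x = n \<and> set x \<subseteq> {1..2^q}}"

definition chan_n :: "(nat \<Rightarrow> nat \<Rightarrow> 'o) \<Rightarrow> nat list \<Rightarrow> nat list \<Rightarrow> 'o list" where
  "chan_n W x y = map (\<lambda>(a, b). W a b) (zip x y)"

definition is_code :: "nat \<Rightarrow> nat \<Rightarrow> nat \<Rightarrow> nat \<Rightarrow> (nat \<Rightarrow> nat list) \<Rightarrow> (nat \<Rightarrow> nat list)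
    \<Rightarrow> ('o list \<Rightarrow> nat) \<Rightarrow> ('o list \<Rightarrow> nat) \<Rightarrow> bool" where
  "is_code q n M1 M2 E1 E2 D1 D2 \<longleftrightarrow>
     (\<forall>m\<in>{1..M1}. E1 m \<in> words q n) \<and> (\<forall>m\<in>{1..M2}. E2 m \<in> words q n) \<and>
     (\<forall>z. length z = n \<longrightarrow> D1 z \<in> {1..M1}) \<and> (\<forall>z. length z = n \<longrightarrow> D2 z \<in> {1..M2})"

definition succeeds :: "(nat \<Rightarrow> nat \<Rightarrow> 'o) \<Rightarrow> (nat \<Rightarrow> nat \<Rightarrow> 'o) \<Rightarrow> (nat \<Rightarrow> nat list) \<Rightarrow> (nat \<Rightarrow> nat list)
    \<Rightarrow> ('o list \<Rightarrow> nat) \<Rightarrow> ('o list \<Rightarrow> nat) \<Rightarrow> nat \<Rightarrow> nat \<Rightarrow> bool" where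
  "succeeds W1 W2 E1 E2 D1 D2 m1 m2 \<longleftrightarrow>
     D1 (chan_n W1 (E1 m1) (E2 m2)) = m1 \<and> D2 (chan_n W2 (E1 m1) (E2 m2)) = m2"

text \<open>Message set sizes (M1,M2) are achievable with success probability at least 1 - eps
  (messages uniform on [M1] x [M2]) at block length n.\<close>
definition achievable :: "nat \<Rightarrow> (nat \<Rightarrow> nat \<Rightarrow> 'o) \<Rightarrow> (nat \<Rightarrow> nat \<Rightarrow> 'o) \<Rightarrow> real \<Rightarrow> nat
    \<Rightarrow> nat \<Rightarrow> nat \<Rightarrow> bool" where
  "achievable q W1 W2 eps n M1 M2 \<longleftrightarrow> M1 \<ge> 1 \<and> M2 \<ge> 1 \<and>
     (\<exists>E1 E2 D1 D2. is_code q n M1 M2 E1 E2 D1 D2 \<and>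
        real (card {(m1, m2). m1 \<in> {1..M1} \<and> m2 \<in> {1..M2} \<and> succeeds W1 W2 E1 E2 D1 D2 m1 m2})
          \<ge> (1 - eps) * real M1 * real M2)"

definition sum_cap_n :: "nat \<Rightarrow> (nat \<Rightarrow> nat \<Rightarrow> 'o) \<Rightarrow> (nat \<Rightarrow> nat \<Rightarrow> 'o) \<Rightarrow> real \<Rightarrow> nat \<Rightarrow> real" where
  "sum_cap_n q W1 W2 eps n =
     Sup {(log 2 (real M1) + log 2 (real M2)) / real n | M1 M2. achievable q W1 W2 eps n M1 M2}"

definition sum_cap :: "nat \<Rightarrow> (nat \<Rightarrow> nat \<Rightarrow> 'o) \<Rightarrow> (nat \<Rightarrow> nat \<Rightarrow> 'o) \<Rightarrow> real \<Rightarrow> real" where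
  "sum_cap q W1 W2 eps = (SUP n\<in>{1..}. sum_cap_n q W1 W2 eps n)"

end

theory Submission imports Defs begin

lemma divide_le_self_real: "0 \<le> (a::real) \<Longrightarrow> 1 \<le> b \<Longrightarrow> a / b \<le> a"
  using mult_left_mono[of 1 b a] by (simp add: divide_le_eq)

lemma words_fin: "finite (words q n)" "card (words q n) = 2^(q*n)"
proof -
  have e: "words q n = {xs. set xs \<subseteq> {1..(2::nat)^q} \<and> length xs = n}"
    unfolding words_def by auto
  show "finite (words q n)" unfolding e by (rule finite_lists_length_eq) simp
  show "card (words q n) = 2^(q*n)" unfolding e
    by (subst card_lists_length_eq) (simp_all add: power_mult)
qed

lemma bound:
  assumes "achievable q W1 W2 eps n M1 M2"
  shows "(1-eps) * real M1 * real M2 \<le> 2^(2*q*n)"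
proof -
  from assms obtain E1 E2 D1 D2 where c: "is_code q n M1 M2 E1 E2 D1 D2"
    and k: "real (card {(m1, m2). m1 \<in> {1..M1} \<and> m2 \<in> {1..M2} \<and> succeeds W1 W2 E1 E2 D1 D2 m1 m2})
          \<ge> (1 - eps) * real M1 * real M2" unfolding achievable_def by blast
  define S where "S = {(m1, m2). m1 \<in> {1..M1} \<and> m2 \<in> {1..M2} \<and> succeeds W1 W2 E1 E2 D1 D2 m1 m2}"
  define g where "g = (\<lambda>(m1::nat,m2::nat). (E1 m1, E2 m2))"
  have inj: "inj_on g S"
  proof (rule inj_onI)
    fix a b assume ab: "a \<in> S" "b \<in> S" "g a = g b"
    obtain a1 a2 b1 b2 where p: "a = (a1,a2)" "b = (b1,b2)" by fastforce
    have sa: "succeeds W1 W2 E1 E2 D1 D2 a1 a2" "succeeds W1 W2 E1 E2 D1 D2 b1 b2"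
      using ab p unfolding S_def by auto
    have e: "E1 a1 = E1 b1" "E2 a2 = E2 b2" using ab(3) p unfolding g_def by auto
    have "a1 = b1" using sa e unfolding succeeds_def by metis
    moreover have "a2 = b2" using sa e unfolding succeeds_def by metis
    ultimately show "a = b" using p by simp
  qed
  have sub: "g ` S \<subseteq> words q n \<times> words q n"
    using c unfolding S_def g_def is_code_def by auto
  have "card S = card (g ` S)" using inj by (simp add: card_image)
  also have "\<dots> \<le> card (words q n \<times> words q n)"
    by (rule card_mono) (use sub words_fin in auto)
  also have "\<dots> = 2^(2*q*n)" by (simp add: card_cartesian_product words_fin power_add[symmetric] add_mult_distrib)
  finally have "real (card S) \<le> 2^(2*q*n)" by (metis of_nat_le_iff of_nat_numeral of_nat_power)
  with k show ?thesis unfolding S_def by linarith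
qed

lemma subcode:
  assumes c: "is_code q n M1 M2 E1 E2 D1 D2"
    and T1: "T1 \<subseteq> {1..M1}" "T1 \<noteq> {}" and T2: "T2 \<subseteq> {1..M2}" "T2 \<noteq> {}"
    and succ: "\<And>a b. a \<in> T1 \<Longrightarrow> b \<in> T2 \<Longrightarrow> succeeds W1 W2 E1 E2 D1 D2 a b"
  shows "achievable q W1 W2 0 n (card T1) (card T2)"
proof -
  have f1: "finite T1" "finite T2" using T1 T2 finite_subset by auto
  obtain f where f: "bij_betw f {1..card T1} T1" using ex_bij_betw_nat_finite_1 f1 by blast
  obtain g where g: "bij_betw g {1..card T2} T2" using ex_bij_betw_nat_finite_1 f1 by blast
  define E1' where "E1' = (\<lambda>m. E1 (f m))"
  define E2' where "E2' = (\<lambda>m. E2 (g m))"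
  define D1' where "D1' = (\<lambda>z. if D1 z \<in> T1 then the_inv_into {1..card T1} f (D1 z) else 1)"
  define D2' where "D2' = (\<lambda>z. if D2 z \<in> T2 then the_inv_into {1..card T2} g (D2 z) else 1)"
  have k1: "card T1 \<ge> 1" "card T2 \<ge> 1" using T1 T2 f1 by (auto simp: Suc_le_eq card_gt_0_iff)
  have code: "is_code q n (card T1) (card T2) E1' E2' D1' D2'"
    unfolding is_code_def
  proof (intro conjI ballI allI impI)
    fix m assume "m \<in> {1..card T1}"
    then have "f m \<in> {1..M1}" using f T1 bij_betwE by blast
    then show "E1' m \<in> words q n" using c unfolding is_code_def E1'_def by blast
  next
    fix m assume "m \<in> {1..card T2}"
    then have "g m \<in> {1..M2}" using g T2 bij_betwE by blast
    then show "E2' m \<in> words q n" using c unfolding is_code_def E2'_def by blast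
  next
    fix z
    show "D1' z \<in> {1..card T1}" unfolding D1'_def using k1 f
      using the_inv_into_into[of f "{1..card T1}" "D1 z" "{1..card T1}"]
      by (auto simp: bij_betw_def)
    show "D2' z \<in> {1..card T2}" unfolding D2'_def using k1 g
      using the_inv_into_into[of g "{1..card T2}" "D2 z" "{1..card T2}"]
      by (auto simp: bij_betw_def)
  qed
  have eq: "{(m1, m2). m1 \<in> {1..card T1} \<and> m2 \<in> {1..card T2} \<and> succeeds W1 W2 E1' E2' D1' D2' m1 m2}
      = {1..card T1} \<times> {1..card T2}"
  proof -
    have "succeeds W1 W2 E1' E2' D1' D2' a b" if a: "a \<in> {1..card T1}" and b: "b \<in> {1..card T2}" for a b
    proof -
      have fa: "f a \<in> T1" using a f bij_betwE by fastforce
      have gb: "g b \<in> T2" using b g bij_betwE by fastforce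
      have s: "succeeds W1 W2 E1 E2 D1 D2 (f a) (g b)" using succ fa gb by blast
      show ?thesis
        using s fa gb a b f g unfolding succeeds_def E1'_def E2'_def D1'_def D2'_def
        by (auto simp: bij_betw_def the_inv_into_f_f)
    qed
    then show ?thesis by auto
  qed
  have "real (card {(m1, m2). m1 \<in> {1..card T1} \<and> m2 \<in> {1..card T2} \<and> succeeds W1 W2 E1' E2' D1' D2' m1 m2})
     \<ge> (1-0)*real(card T1)*real(card T2)" unfolding eq card_cartesian_product by simp
  then show ?thesis unfolding achievable_def using k1 code by blast
qed

lemma improve:
  assumes a: "achievable q W1 W2 eps n M1 M2" and e: "eps < 1"
  shows "\<exists>M1' M2'. achievable q W1 W2 0 n M1' M2' \<and> (1-eps) * real (max M1 M2) \<le> real M1' * real M2'"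
proof -
  from a obtain E1 E2 D1 D2 where c: "is_code q n M1 M2 E1 E2 D1 D2"
    and k: "real (card {(m1, m2). m1 \<in> {1..M1} \<and> m2 \<in> {1..M2} \<and> succeeds W1 W2 E1 E2 D1 D2 m1 m2})
          \<ge> (1 - eps) * real M1 * real M2" and M: "M1 \<ge> 1" "M2 \<ge> 1" unfolding achievable_def by blast
  define P where "P = succeeds W1 W2 E1 E2 D1 D2"
  define S where "S = {(m1, m2). m1 \<in> {1..M1} \<and> m2 \<in> {1..M2} \<and> P m1 m2}"
  define R where "R = (\<lambda>a. {b\<in>{1..M2}. P a b})"
  define C where "C = (\<lambda>b. {a\<in>{1..M1}. P a b})"
  have kS: "(1-eps) * real M1 * real M2 \<le> real (card S)" using k unfolding S_def P_def .
  have SR: "S = Sigma {1..M1} R" unfolding S_def R_def by auto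
  have SC: "S = (\<lambda>(b,a). (a,b)) ` Sigma {1..M2} C" unfolding S_def C_def by auto
  have cR: "card S = (\<Sum>a\<in>{1..M1}. card (R a))" unfolding SR by (simp add: R_def)
  have "inj_on (\<lambda>(b,a). (a::nat,b::nat)) (Sigma {1..M2} C)" by (auto simp: inj_on_def)
  then have cC: "card S = (\<Sum>b\<in>{1..M2}. card (C b))" unfolding SC by (simp add: card_image C_def)
  have pos: "0 < 1 - eps" using e by simp
  obtain m1 where m1: "m1 \<in> {1..M1}" "(1-eps) * real M2 \<le> real (card (R m1))"
  proof (rule ccontr)
    assume "\<not> thesis"
    then have lt: "\<And>a. a \<in> {1..M1} \<Longrightarrow> real (card (R a)) < (1-eps) * real M2" using that by force
    have "real (card S) = (\<Sum>a\<in>{1..M1}. real (card (R a)))" unfolding cR by simp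
    also have "\<dots> < (\<Sum>a\<in>{1..M1}. (1-eps) * real M2)" by (rule sum_strict_mono) (use M lt in auto)
    also have "\<dots> = (1-eps) * real M1 * real M2" by simp
    finally show False using kS by simp
  qed
  obtain m2 where m2: "m2 \<in> {1..M2}" "(1-eps) * real M1 \<le> real (card (C m2))"
  proof (rule ccontr)
    assume "\<not> thesis"
    then have lt: "\<And>a. a \<in> {1..M2} \<Longrightarrow> real (card (C a)) < (1-eps) * real M1" using that by force
    have "real (card S) = (\<Sum>a\<in>{1..M2}. real (card (C a)))" unfolding cC by simp
    also have "\<dots> < (\<Sum>a\<in>{1..M2}. (1-eps) * real M1)" by (rule sum_strict_mono) (use M lt in auto)
    also have "\<dots> = (1-eps) * real M1 * real M2" by simp
    finally show False using kS by simp
  qed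
  have p1: "0 < (1-eps) * real M2" "0 < (1-eps) * real M1" using pos M by auto
  have Rne: "R m1 \<noteq> {}" using m1 p1 by (metis card.empty leD of_nat_0)
  have Cne: "C m2 \<noteq> {}" using m2 p1 by (metis card.empty leD of_nat_0)
  have A1: "achievable q W1 W2 0 n (card {m1}) (card (R m1))"
    by (rule subcode[OF c]) (use m1 Rne in \<open>auto simp: R_def P_def\<close>)
  have A2: "achievable q W1 W2 0 n (card (C m2)) (card {m2})"
    by (rule subcode[OF c]) (use m2 Cne in \<open>auto simp: C_def P_def\<close>)
  show ?thesis
  proof (cases "M1 \<le> M2")
    case True
    then show ?thesis using A1 m1 by (intro exI[of _ 1] exI[of _ "card (R m1)"]) (auto simp: max_def)
  next
    case False
    then show ?thesis using A2 m2 by (intro exI[of _ "card (C m2)"] exI[of _ 1]) (auto simp: max_def)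
  qed
qed

lemma ach11: "achievable q W1 W2 0 n 1 1"
proof -
  have c: "is_code q n 1 1 (\<lambda>_. replicate n 1) (\<lambda>_. replicate n 1) (\<lambda>_. 1) (\<lambda>_. 1)"
    unfolding is_code_def words_def by auto
  have "achievable q W1 W2 0 n (card {1::nat}) (card {1::nat})"
    by (rule subcode[OF c]) (auto simp: succeeds_def)
  then show ?thesis by simp
qed

lemma ach_mono: "achievable q W1 W2 0 n M1 M2 \<Longrightarrow> 0 \<le> e \<Longrightarrow> achievable q W1 W2 e n M1 M2"
proof -
  assume a: "achievable q W1 W2 0 n M1 M2" and e: "0 \<le> e"
  have "(1-e)*real M1*real M2 \<le> (1-0)*real M1*real M2"
    using e by (intro mult_right_mono) auto
  then show ?thesis using a unfolding achievable_def by (meson order_trans)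
qed

lemma logbound:
  assumes "achievable q W1 W2 e n M1 M2" "e < 1"
  shows "log 2 (real M1) + log 2 (real M2) \<le> real (2*q*n) - log 2 (1-e)"
proof -
  have M: "M1 \<ge> 1" "M2 \<ge> 1" using assms unfolding achievable_def by auto
  have b: "(1-e) * real M1 * real M2 \<le> 2^(2*q*n)" using bound[OF assms(1)] .
  have "log 2 ((1-e) * real M1 * real M2) \<le> log 2 (2^(2*q*n))"
    using b M assms(2) by (subst log_le_cancel_iff) auto
  also have "\<dots> = real (2*q*n)" by (simp add: log_nat_power)
  finally show ?thesis using M assms(2) by (simp add: log_mult)
qed

lemma A_facts:
  assumes "e < 1" "0 \<le> e"
  shows "{(log 2 (real M1) + log 2 (real M2)) / real n | M1 M2. achievable q W1 W2 e n M1 M2} \<noteq> {}"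
    and "bdd_above {(log 2 (real M1) + log 2 (real M2)) / real n | M1 M2. achievable q W1 W2 e n M1 M2}"
proof -
  show "{(log 2 (real M1) + log 2 (real M2)) / real n | M1 M2. achievable q W1 W2 e n M1 M2} \<noteq> {}"
    using ach_mono[OF ach11 assms(2)] by blast
  show "bdd_above {(log 2 (real M1) + log 2 (real M2)) / real n | M1 M2. achievable q W1 W2 e n M1 M2}"
  proof (rule bdd_aboveI)
    fix x assume "x \<in> {(log 2 (real M1) + log 2 (real M2)) / real n | M1 M2. achievable q W1 W2 e n M1 M2}"
    then obtain M1 M2 where x: "x = (log 2 (real M1) + log 2 (real M2)) / real n" and a: "achievable q W1 W2 e n M1 M2" by blast
    have l: "log 2 (real M1) + log 2 (real M2) \<le> real (2*q*n) - log 2 (1-e)" using logbound[OF a assms(1)] .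
    have M: "M1 \<ge> 1" "M2 \<ge> 1" using a unfolding achievable_def by auto
    have "0 \<le> log 2 (real M1) + log 2 (real M2)" using M by simp
    show "x \<le> \<bar>real (2*q*n) - log 2 (1-e)\<bar>"
    proof (cases "n = 0")
      case True then show ?thesis by (simp add: x)
    next
      case False
      then have "(log 2 (real M1) + log 2 (real M2)) / real n \<le> log 2 (real M1) + log 2 (real M2)"
        using \<open>0 \<le> log 2 (real M1) + log 2 (real M2)\<close>
        by (intro divide_le_self_real) auto
      then show ?thesis using l x by linarith
    qed
  qed
qed

lemma keyineq:
  fixes M1 M2 N1 N2 :: nat and e :: real
  assumes "M1 \<ge> 1" "M2 \<ge> 1" "N1 \<ge> 1" "N2 \<ge> 1" "e < 1" "(1-e) * real (max M1 M2) \<le> real N1 * real N2"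
  shows "log 2 M1 + log 2 M2 \<le> 2 * (log 2 N1 + log 2 N2) - 2 * log 2 (1-e)"
proof -
  have "log 2 M1 \<le> log 2 (max M1 M2)" "log 2 M2 \<le> log 2 (max M1 M2)" using assms by auto
  moreover have "log 2 ((1-e) * real (max M1 M2)) \<le> log 2 (real N1 * real N2)"
    using assms by (subst log_le_cancel_iff) auto
  then have "log 2 (1-e) + log 2 (max M1 M2) \<le> log 2 N1 + log 2 N2"
    using assms by (simp add: log_mult)
  ultimately show ?thesis by argo
qed

lemma part1:
  fixes eps :: real
  assumes "n \<ge> 1" "0 < eps" "eps < 1"
  shows "sum_cap_n q W1 W2 eps n \<le> 2 * (sum_cap_n q W1 W2 0 n + (- log 2 (1 - eps) / real n))"
  unfolding sum_cap_n_def
proof (rule cSup_least)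
  show "{(log 2 (real M1) + log 2 (real M2)) / real n | M1 M2. achievable q W1 W2 eps n M1 M2} \<noteq> {}"
  proof -
    have h: "achievable q W1 W2 eps n 1 1" by (rule ach_mono[OF ach11]) (use assms(2) in simp)
    have "(log 2 (real 1) + log 2 (real 1)) / real n \<in> {(log 2 (real M1) + log 2 (real M2)) / real n | M1 M2. achievable q W1 W2 eps n M1 M2}"
      using h by blast
    then show ?thesis by (metis empty_iff)
  qed
  fix x assume "x \<in> {(log 2 (real M1) + log 2 (real M2)) / real n | M1 M2. achievable q W1 W2 eps n M1 M2}"
  then obtain M1 M2 where x: "x = (log 2 (real M1) + log 2 (real M2)) / real n" and a: "achievable q W1 W2 eps n M1 M2" by blast
  obtain N1 N2 where a0: "achievable q W1 W2 0 n N1 N2" and le: "(1-eps) * real (max M1 M2) \<le> real N1 * real N2"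
    using improve[OF a assms(3)] by blast
  have M: "M1 \<ge> 1" "M2 \<ge> 1" "N1 \<ge> 1" "N2 \<ge> 1" using a a0 unfolding achievable_def by auto
  have k: "log 2 M1 + log 2 M2 \<le> 2 * (log 2 N1 + log 2 N2) - 2 * log 2 (1-eps)"
    by (rule keyineq[OF M assms(3) le])
  have y: "(log 2 (real N1) + log 2 (real N2)) / real n \<le> Sup {(log 2 (real M1) + log 2 (real M2)) / real n | M1 M2. achievable q W1 W2 0 n M1 M2}"
  proof (rule cSup_upper)
    show "(log 2 (real N1) + log 2 (real N2)) / real n \<in> {(log 2 (real M1) + log 2 (real M2)) / real n | M1 M2. achievable q W1 W2 0 n M1 M2}"
      using a0 by blast
    show "bdd_above {(log 2 (real M1) + log 2 (real M2)) / real n | M1 M2. achievable q W1 W2 0 n M1 M2}"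
      by (rule A_facts(2)) auto
  qed
  have np: "real n > 0" using assms by simp
  have "x \<le> 2 * ((log 2 (real N1) + log 2 (real N2)) / real n + (- log 2 (1 - eps) / real n))"
  proof -
    have e: "2 * ((log 2 (real N1) + log 2 (real N2)) / real n + (- log 2 (1 - eps) / real n))
       = (2 * (log 2 N1 + log 2 N2) - 2 * log 2 (1-eps)) / real n" by (simp add: diff_divide_distrib add_divide_distrib)
    show ?thesis unfolding x e using k np by (intro divide_right_mono) auto
  qed
  also have "\<dots> \<le> 2 * (Sup {(log 2 (real M1) + log 2 (real M2)) / real n | M1 M2. achievable q W1 W2 0 n M1 M2} + (- log 2 (1 - eps) / real n))"
    using y by (intro mult_left_mono add_right_mono) auto
  finally show "x \<le> 2 * (Sup {(log 2 (real M1) + log 2 (real M2)) / real n | M1 M2. achievable q W1 W2 0 n M1 M2} + (- log 2 (1 - eps) / real n))" .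
qed

lemma cap0_bound:
  assumes "n \<ge> 1"
  shows "sum_cap_n q W1 W2 0 n \<le> real (2*q)"
  unfolding sum_cap_n_def
proof (rule cSup_least)
  show "{(log 2 (real M1) + log 2 (real M2)) / real n | M1 M2. achievable q W1 W2 0 n M1 M2} \<noteq> {}"
  proof -
    have h: "achievable q W1 W2 0 n 1 1" using ach11 by blast
    have "(log 2 (real 1) + log 2 (real 1)) / real n \<in> {(log 2 (real M1) + log 2 (real M2)) / real n | M1 M2. achievable q W1 W2 0 n M1 M2}"
      using h by blast
    then show ?thesis by (metis empty_iff)
  qed
  fix x assume "x \<in> {(log 2 (real M1) + log 2 (real M2)) / real n | M1 M2. achievable q W1 W2 0 n M1 M2}"
  then obtain M1 M2 where x: "x = (log 2 (real M1) + log 2 (real M2)) / real n" and a: "achievable q W1 W2 0 n M1 M2" by blast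
  have l: "log 2 (real M1) + log 2 (real M2) \<le> real (2*q*n)" using logbound[OF a] by simp
  have np: "real n > 0" using assms by simp
  show "x \<le> real (2*q)" unfolding x using l np by (simp add: divide_le_eq)
qed

theorem lemma1:
  fixes q n :: nat and eps :: real
    and W1 W2 :: "nat \<Rightarrow> nat \<Rightarrow> 'o::finite"
  assumes "q \<ge> 1" and "n \<ge> 1" and "0 < eps" and "eps < 1"
  shows "sum_cap_n q W1 W2 eps n / 2 - (- log 2 (1 - eps) / real n) \<le> sum_cap_n q W1 W2 0 n
       \<and> sum_cap q W1 W2 eps / 2 - (- log 2 (1 - eps)) \<le> sum_cap q W1 W2 0"
proof
  show "sum_cap_n q W1 W2 eps n / 2 - (- log 2 (1 - eps) / real n) \<le> sum_cap_n q W1 W2 0 n"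
    using part1[OF assms(2-4), of q W1 W2] by simp
  have dpos: "0 \<le> - log 2 (1 - eps)" using assms by simp
  have bdd: "bdd_above ((\<lambda>m. sum_cap_n q W1 W2 0 m) ` {1..})"
    using cap0_bound by (intro bdd_aboveI[of _ "real (2*q)"]) auto
  have "sum_cap q W1 W2 eps \<le> 2 * (sum_cap q W1 W2 0 + (- log 2 (1 - eps)))"
    unfolding sum_cap_def
  proof (rule cSUP_least)
    show "{1::nat..} \<noteq> {}" by auto
    fix m :: nat assume m: "m \<in> {1..}"
    have "sum_cap_n q W1 W2 eps m \<le> 2 * (sum_cap_n q W1 W2 0 m + (- log 2 (1 - eps) / real m))"
      using part1[of m eps q W1 W2] m assms by simp
    also have "\<dots> \<le> 2 * ((SUP n\<in>{1..}. sum_cap_n q W1 W2 0 n) + (- log 2 (1 - eps)))"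
    proof -
      have "sum_cap_n q W1 W2 0 m \<le> (SUP n\<in>{1..}. sum_cap_n q W1 W2 0 n)"
        by (rule cSUP_upper[OF m bdd])
      moreover have "- log 2 (1 - eps) / real m \<le> - log 2 (1 - eps)"
        using m dpos by (intro divide_le_self_real) auto
      ultimately show ?thesis by simp
    qed
    finally show "sum_cap_n q W1 W2 eps m \<le> 2 * ((SUP n\<in>{1..}. sum_cap_n q W1 W2 0 n) + (- log 2 (1 - eps)))" .
  qed
  then show "sum_cap q W1 W2 eps / 2 - (- log 2 (1 - eps)) \<le> sum_cap q W1 W2 0" by simp
qed

end
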